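(* For $i,j\in I_n$ with $i\ne j$ consider the inequality $$(\ast)_{ij}:\qquad \max\left\{0,\ \frac{a_{ij}}{a_{jj}}\bigl(1-\alpha_jU^{I_n\setminus\{i,j\}}\bigr)\right\}<1-\alpha_iU^{I_n\setminus\{i,j\}}.$$ (i) For any $J\subset I_n$ with $|J|>1$, if condition $(C_i)$ holds for all $i\in J$, then $(\ast)_{ij}$ holds for all $i,j\in J$ with $i\ne j$. (ii) For a fixed $i\in I_n$, if $(\ast)_{ij}$ holds for all $j\in I_n\setminus\{i\}$, then condition $(C_i)$ holds. (iii) Condition $(C_i)$ holds for all $i\in I_n$ if and only if $(\ast)_{ij}$ holds for all $i,j\in I_n$ with $i\ne j$.
   Context: Fix $n\ge 2$ and $I_m=\{1,\dots,m\}$. Consider the Lotka–Volterra system $x_i'=b_ix_i(1-\alpha_ix)$, $i\in I_n$, where $b_i>0$, $\alpha_i=(a_{i1},\dots,a_{in})$ with $a_{ii}>0$ and $a_{ij}\ge 0$, on $\mathbb{R}^n_+$. For $u\le v$ (componentwise), $[u,v]=\{x\in\mathbb{R}^n_+:u\le x\le v\}$. For $J\subset I_n$, $u^J_i=u_i$ for $i\in J$ and $0$ otherwise. $\gamma_i=\{x\in\mathbb{R}^n_+:\alpha_ix=1\}$. Define $U$ componentwise by: $U_i=a_{ii}^{-1}$ if $a_{ii}\le a_{ji}$ or $a_{ij}=0$ for some $j\ne i$; otherwise $U_i=0$ if $a_{ji}<a_{ii}$ and $a_{jk}\le a_{ik}$ for all $j,k\in I_n\setminus\{i\}$; otherwise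 $U_i=\max\{\frac{a_{kj}-a_{ij}}{a_{ii}a_{kj}-a_{ij}a_{ki}}: j,k\in I_n\setminus\{i\},\ a_{kj}>a_{ij}\}$. Condition $(C_k)$: either $\alpha_kU^{I_n\setminus\{k\}}<1$, or every $x\in\gamma_k\cap[0,U^{I_n\setminus\{k\}}]$ satisfies $\alpha_jx>1$ for all $j\in I_n\setminus\{k\}$. *)

theory Defs
  imports "HOL-Analysis.Analysis"
begin

definition LValpha :: "real^'n^'n \<Rightarrow> 'n \<Rightarrow> real^'n \<Rightarrow> real" where
  "LValpha a i x = (\<Sum>j\<in>UNIV. a$i$j * x$j)"

definition restr :: "real^'n \<Rightarrow> 'n set \<Rightarrow> real^'n" where
  "restr u J = (\<chi> i. if i \<in> J then u$i else 0)"

definition Uvec :: "real^'n^'n \<Rightarrow> real^'n" where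
  "Uvec a = (\<chi> i.
     if (\<exists>j. j \<noteq> i \<and> (a$i$i \<le> a$j$i \<or> a$i$j = 0)) then 1 / a$i$i
     else if (\<forall>j k. j \<noteq> i \<longrightarrow> k \<noteq> i \<longrightarrow> a$j$i < a$i$i \<and> a$j$k \<le> a$i$k) then 0
     else Max {(a$k$j - a$i$j) / (a$i$i * a$k$j - a$i$j * a$k$i) | j k.
                 j \<noteq> i \<and> k \<noteq> i \<and> a$k$j > a$i$j})"

definition gamma :: "real^'n^'n \<Rightarrow> 'n \<Rightarrow> (real^'n) set" where
  "gamma a k = {x. (\<forall>i. 0 \<le> x$i) \<and> LValpha a k x = 1}"

definition box_int :: "real^'n \<Rightarrow> real^'n \<Rightarrow> (real^'n) set" where
  "box_int u v = {x. (\<forall>i. 0 \<le> x$i) \<and> (\<forall>i. u$i \<le> x$i \<and> x$i \<le> v$i)}"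

definition condC :: "real^'n^'n \<Rightarrow> 'n \<Rightarrow> bool" where
  "condC a k \<longleftrightarrow>
     LValpha a k (restr (Uvec a) (UNIV - {k})) < 1 \<or>
     (\<forall>x \<in> gamma a k \<inter> box_int 0 (restr (Uvec a) (UNIV - {k})).
        \<forall>j. j \<noteq> k \<longrightarrow> LValpha a j x > 1)"

definition star :: "real^'n^'n \<Rightarrow> 'n \<Rightarrow> 'n \<Rightarrow> bool" where
  "star a i j \<longleftrightarrow>
     (let W = restr (Uvec a) (UNIV - {i, j}) in
      max 0 (a$i$j / a$j$j * (1 - LValpha a j W)) < 1 - LValpha a i W)"

end

theory Submission
  imports Defs
begin

lemma L_remove: "LValpha a m x = a$m$j * x$j + (\<Sum>l\<in>UNIV-{j}. a$m$l * x$l)"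
  unfolding LValpha_def by (simp add: sum.remove[of UNIV j])

lemma L_upd: "LValpha a m (\<chi> l. if l = j then c else x$l) = LValpha a m x + a$m$j * (c - x$j)"
proof -
  have "(\<Sum>l\<in>UNIV-{j}. a$m$l * (\<chi> l. if l = j then c else x$l)$l) = (\<Sum>l\<in>UNIV-{j}. a$m$l * x$l)"
    by (rule sum.cong) auto
  then show ?thesis using L_remove[of a m "\<chi> l. if l = j then c else x$l" j] L_remove[of a m x j]
    by (simp add: algebra_simps)
qed

lemma L_scale: "LValpha a m (\<chi> l. t * x$l) = t * LValpha a m x"
  unfolding LValpha_def by (simp add: sum_distrib_left algebra_simps)

lemma L_mono:
  assumes "\<forall>i j. a$i$j \<ge> 0" "\<forall>l. x$l \<le> y$l"
  shows "LValpha a m x \<le> LValpha a m y"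
  unfolding LValpha_def using assms by (intro sum_mono mult_left_mono) auto

lemma L_nonneg:
  assumes "\<forall>i j. a$i$j \<ge> 0" "\<forall>l. 0 \<le> x$l"
  shows "0 \<le> LValpha a m x"
  unfolding LValpha_def using assms by (intro sum_nonneg) auto

lemma fin_set: "finite {f j k | j k. P j k}" for f :: "'n::finite \<Rightarrow> 'n \<Rightarrow> real"
proof -
  have "{f j k | j k. P j k} \<subseteq> (\<lambda>(j,k). f j k) ` UNIV" by auto
  then show ?thesis by (rule finite_subset) simp
qed

definition "cc1 a j \<longleftrightarrow> (\<exists>k. k \<noteq> j \<and> (a$j$j \<le> a$k$j \<or> a$j$k = 0))"
definition "cc2 a j \<longleftrightarrow> (\<forall>k l. k \<noteq> j \<longrightarrow> l \<noteq> j \<longrightarrow> a$k$j < a$j$j \<and> a$k$l \<le> a$j$l)"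
definition "SS a j = {(a$k$l - a$j$l) / (a$j$j * a$k$l - a$j$l * a$k$j) | l k. l \<noteq> j \<and> k \<noteq> j \<and> a$k$l > a$j$l}"

lemma Uvec_eq: "Uvec a $ j = (if cc1 a j then 1 / a$j$j else if cc2 a j then 0 else Max (SS a j))"
  unfolding Uvec_def cc1_def cc2_def SS_def by simp

lemma SS_le:
  assumes "l \<noteq> j" "k \<noteq> j" "a$k$l > a$j$l"
  shows "(a$k$l - a$j$l) / (a$j$j * a$k$l - a$j$l * a$k$j) \<le> Max (SS a j)"
proof -
  have "(a$k$l - a$j$l) / (a$j$j * a$k$l - a$j$l * a$k$j) \<in> SS a j" using assms unfolding SS_def by blast
  moreover have "finite (SS a j)"
  proof -
    have "SS a j \<subseteq> (\<lambda>(l,k). (a$k$l - a$j$l) / (a$j$j * a$k$l - a$j$l * a$k$j)) ` UNIV"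
      unfolding SS_def by auto
    then show ?thesis by (rule finite_subset) simp
  qed
  ultimately show ?thesis by simp
qed

lemma U_nonneg:
  assumes pos: "\<forall>i. a$i$i > 0" and nn: "\<forall>i j. a$i$j \<ge> 0"
  shows "0 \<le> Uvec a $ j"
proof (cases "cc1 a j")
  case True then show ?thesis using pos[rule_format, of j] by (simp add: Uvec_eq)
next
  case c1: False
  show ?thesis
  proof (cases "cc2 a j")
    case True then show ?thesis using c1 by (simp add: Uvec_eq)
  next
    case False
    then obtain k l where kl: "k \<noteq> j" "l \<noteq> j" "a$k$l > a$j$l" "a$k$j < a$j$j"
      using c1 unfolding cc1_def cc2_def by force
    have d1: "a$j$j * a$k$l > a$j$j * a$j$l" using kl pos by simp
    have d2: "a$j$j * a$j$l \<ge> a$k$j * a$j$l" using kl nn by (simp add: mult_right_mono)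
    have "0 < (a$k$l - a$j$l) / (a$j$j * a$k$l - a$j$l * a$k$j)"
      using d1 d2 kl by (intro divide_pos_pos) (auto simp: mult.commute)
    also have "\<dots> \<le> Max (SS a j)" by (rule SS_le[OF kl(2,1,3)])
    finally show ?thesis using c1 False by (simp add: Uvec_eq)
  qed
qed

lemma KP:
  assumes pos: "\<forall>i. a$i$i > 0" and nn: "\<forall>i j. a$i$j \<ge> 0"
    and x0: "\<forall>l. 0 \<le> x$l" and xj: "LValpha a j x \<le> 1" and gt: "Uvec a $ j < x$j" and kj: "k \<noteq> j"
  shows "LValpha a k x < 1"
proof -
  define Sj where "Sj = (\<Sum>l\<in>UNIV-{j}. a$j$l * x$l)"
  define Sk where "Sk = (\<Sum>l\<in>UNIV-{j}. a$k$l * x$l)"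
  have Lj: "LValpha a j x = a$j$j * x$j + Sj" unfolding Sj_def by (rule L_remove)
  have Lk: "LValpha a k x = a$k$j * x$j + Sk" unfolding Sk_def by (rule L_remove)
  have Sj0: "0 \<le> Sj" unfolding Sj_def using nn x0 by (intro sum_nonneg) auto
  have Sk0: "0 \<le> Sk" unfolding Sk_def using nn x0 by (intro sum_nonneg) auto
  have xjp: "0 < x$j" using U_nonneg[OF pos nn, of j] gt by linarith
  have ajj: "0 < a$j$j" using pos by simp
  show ?thesis
  proof (cases "cc1 a j")
    case True
    then have "1 / a$j$j < x$j" using gt by (simp add: Uvec_eq)
    then have "1 < a$j$j * x$j" using ajj by (simp add: divide_less_eq mult.commute)
    then show ?thesis using Lj Sj0 xj by linarith
  next
    case c1: False
    have c1': "\<And>l. l \<noteq> j \<Longrightarrow> a$l$j < a$j$j \<and> 0 < a$j$l"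
      using c1 nn unfolding cc1_def by (metis not_le order_le_less)
    show ?thesis
    proof (cases "cc2 a j")
      case True
      have "Sk \<le> Sj" unfolding Sk_def Sj_def
        using True x0 kj unfolding cc2_def by (intro sum_mono mult_right_mono) auto
      moreover have "a$k$j * x$j < a$j$j * x$j" using c1'[OF kj] xjp by simp
      ultimately show ?thesis using Lj Lk xj by linarith
    next
      case c2: False
      have U: "Uvec a $ j = Max (SS a j)" using c1 c2 by (simp add: Uvec_eq)
      define R where "R = 1 - a$j$j * x$j"
      have SjR: "Sj \<le> R" using Lj xj R_def by linarith
      have akj: "a$k$j * x$j < a$j$j * x$j" using c1'[OF kj] xjp by simp
      have akj1: "0 \<le> 1 - a$k$j * x$j" using akj Lj xj Sj0 by linarith
      have perl: "a$k$l * R < a$j$l * (1 - a$k$j * x$j)" if lj: "l \<noteq> j" for l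
      proof (cases "a$k$l > a$j$l")
        case True
        define D where "D = a$j$j * a$k$l - a$j$l * a$k$j"
        have d1: "a$j$j * a$k$l > a$j$j * a$j$l" using True ajj by simp
        have d2: "a$j$j * a$j$l \<ge> a$k$j * a$j$l" using c1'[OF kj] nn by (simp add: mult_right_mono)
        have Dp: "0 < D" using d1 d2 unfolding D_def by (simp add: mult.commute)
        have "(a$k$l - a$j$l) / D \<le> Max (SS a j)" unfolding D_def by (rule SS_le[OF lj kj True])
        then have "(a$k$l - a$j$l) / D < x$j" using U gt by linarith
        then have "a$k$l - a$j$l < x$j * D" using Dp by (simp add: divide_less_eq mult.commute)
        then show ?thesis unfolding R_def D_def by (simp add: algebra_simps)
      next
        case False
        have R0: "0 \<le> R" using SjR Sj0 by linarith
        have e: "a$j$l * (1 - a$k$j * x$j) - a$k$l * R = R * (a$j$l - a$k$l) + x$j * (a$j$l * (a$j$j - a$k$j))"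
          unfolding R_def by (simp add: algebra_simps)
        have "0 \<le> R * (a$j$l - a$k$l)" using R0 False by simp
        moreover have "0 < x$j * (a$j$l * (a$j$j - a$k$j))" using xjp c1'[OF lj] c1'[OF kj] by simp
        ultimately show ?thesis using e by linarith
      qed
      show ?thesis
      proof (cases "\<exists>l\<in>UNIV-{j}. 0 < x$l")
        case True
        then obtain l0 where l0: "l0 \<noteq> j" "0 < x$l0" by auto
        have "Sk * R = (\<Sum>l\<in>UNIV-{j}. a$k$l * x$l * R)" unfolding Sk_def by (simp add: sum_distrib_right)
        also have "\<dots> < (\<Sum>l\<in>UNIV-{j}. a$j$l * x$l * (1 - a$k$j * x$j))"
        proof (rule sum_strict_mono_ex1)
          show "\<forall>l\<in>UNIV-{j}. a$k$l * x$l * R \<le> a$j$l * x$l * (1 - a$k$j * x$j)"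
          proof
            fix l assume "l \<in> UNIV - {j}"
            then have "a$k$l * R * x$l \<le> a$j$l * (1 - a$k$j * x$j) * x$l"
              using perl[of l] x0 by (intro mult_right_mono) auto
            then show "a$k$l * x$l * R \<le> a$j$l * x$l * (1 - a$k$j * x$j)" by (simp add: algebra_simps)
          qed
          have "a$k$l0 * R * x$l0 < a$j$l0 * (1 - a$k$j * x$j) * x$l0"
            using perl[OF l0(1)] l0 by (intro mult_strict_right_mono) auto
          then show "\<exists>l\<in>UNIV-{j}. a$k$l * x$l * R < a$j$l * x$l * (1 - a$k$j * x$j)"
            using l0 by (intro bexI[of _ l0]) (auto simp: algebra_simps)
        qed simp
        also have "\<dots> = Sj * (1 - a$k$j * x$j)" unfolding Sj_def by (simp add: sum_distrib_right)
        also have "\<dots> \<le> R * (1 - a$k$j * x$j)" using SjR akj1 by (rule mult_right_mono)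
        finally have lt: "Sk * R < (1 - a$k$j * x$j) * R" by (simp add: mult.commute)
        have "0 < a$j$l0 * x$l0" using c1'[OF l0(1)] l0 by simp
        moreover have "a$j$l0 * x$l0 \<le> Sj" unfolding Sj_def
          using nn x0 l0 by (intro member_le_sum) auto
        ultimately have "0 < R" using SjR by linarith
        then have "Sk < 1 - a$k$j * x$j" using lt by simp
        then show ?thesis using Lk by linarith
      next
        case False
        then have "Sk = 0" unfolding Sk_def using x0 by (intro sum.neutral) (metis order_le_less mult_zero_right)
        then show ?thesis using Lk Lj akj xj Sj0 by linarith
      qed
    qed
  qed
qed

lemma restr_split: "i \<noteq> j \<Longrightarrow> restr u (UNIV-{i}) = (\<chi> l. if l = j then u$j else restr u (UNIV-{i,j}) $ l)"
  by (simp add: vec_eq_iff restr_def)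

lemma L_restr2: "i \<noteq> j \<Longrightarrow> LValpha a m (restr u (UNIV-{i})) = LValpha a m (restr u (UNIV-{i,j})) + a$m$j * u$j"
  by (simp add: restr_split[of i j u] L_upd) (simp add: restr_def)

lemma L_restr2': "i \<noteq> j \<Longrightarrow> LValpha a m (restr u (UNIV-{j})) = LValpha a m (restr u (UNIV-{i,j})) + a$m$i * u$i"
  using L_restr2[of j i a m u] by (simp add: insert_commute)

lemma restr_nonneg: "\<forall>i. a$i$i > 0 \<Longrightarrow> \<forall>i j. a$i$j \<ge> 0 \<Longrightarrow> 0 \<le> restr (Uvec a) B $ l"
  using U_nonneg[of a l] by (simp add: restr_def)

lemma condC_use:
  assumes nn: "\<forall>i j. a$i$j \<ge> 0" and C: "condC a k" and g: "x \<in> gamma a k"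
    and b: "x \<in> box_int 0 (restr (Uvec a) (UNIV-{k}))" and mk: "m \<noteq> k"
  shows "LValpha a m x > 1"
proof -
  have "LValpha a k x \<le> LValpha a k (restr (Uvec a) (UNIV-{k}))"
    using b by (intro L_mono[OF nn]) (auto simp: box_int_def)
  moreover have "LValpha a k x = 1" using g by (simp add: gamma_def)
  ultimately show ?thesis using C g b mk unfolding condC_def by auto
qed

lemma partI:
  assumes pos: "\<forall>i. a$i$i > 0" and nn: "\<forall>i j. a$i$j \<ge> 0"
    and ij: "i \<noteq> j" and Ci: "condC a i" and Cj: "condC a j"
  shows "star a i j"
proof -
  define U where "U = Uvec a"
  define W where "W = restr U (UNIV-{i,j})"
  have W0: "\<forall>l. 0 \<le> W$l" unfolding W_def U_def using restr_nonneg[OF pos nn] by blast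
  have Wi: "W$i = 0" "W$j = 0" unfolding W_def restr_def by auto
  have U0: "\<forall>l. 0 \<le> U$l" unfolding U_def using U_nonneg[OF pos nn] by blast
  have ajj: "0 < a$j$j" using pos by simp
  have WleI: "\<And>l. W$l \<le> restr U (UNIV-{i}) $ l" unfolding W_def restr_def using U0 by auto
  have WleJ: "\<And>l. W$l \<le> restr U (UNIV-{j}) $ l" unfolding W_def restr_def using U0 by auto
  have LWi: "\<And>m. LValpha a m (restr U (UNIV-{i})) = LValpha a m W + a$m$j * U$j"
    unfolding W_def using L_restr2[OF ij] by blast
  have LWj: "\<And>m. LValpha a m (restr U (UNIV-{j})) = LValpha a m W + a$m$i * U$i"
    unfolding W_def using L_restr2'[OF ij] by blast
  have A: "LValpha a i W < 1"
  proof (rule ccontr)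
    assume "\<not> LValpha a i W < 1"
    then have Wge: "1 \<le> LValpha a i W" by simp
    define t where "t = 1 / LValpha a i W"
    have t01: "0 < t" "t \<le> 1" using Wge unfolding t_def by auto
    define x where "x = (\<chi> l. t * W$l)"
    have Lx: "\<And>m. LValpha a m x = t * LValpha a m W" unfolding x_def by (rule L_scale)
    have x0: "\<forall>l. 0 \<le> x$l" unfolding x_def using W0 t01 by simp
    have xW: "\<forall>l. x$l \<le> W$l" unfolding x_def using W0 t01 by (simp add: mult_left_le_one_le)
    have xg: "x \<in> gamma a i" unfolding gamma_def using x0 Lx[of i] Wge t_def by simp
    have xb: "x \<in> box_int 0 (restr U (UNIV-{i}))" unfolding box_int_def
      using x0 xW WleI by (auto intro: order_trans)
    have xj: "LValpha a j x > 1" using condC_use[OF nn Ci xg xb[unfolded U_def]] ij by simp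
    define s where "s = 1 / LValpha a j x"
    have s01: "0 < s" "s < 1" using xj unfolding s_def by auto
    define y where "y = (\<chi> l. s * x$l)"
    have Ly: "\<And>m. LValpha a m y = s * LValpha a m x" unfolding y_def by (rule L_scale)
    have y0: "\<forall>l. 0 \<le> y$l" unfolding y_def using x0 s01 by simp
    have yx: "\<forall>l. y$l \<le> x$l" unfolding y_def using x0 s01 by (simp add: mult_left_le_one_le)
    have yg: "y \<in> gamma a j" unfolding gamma_def using y0 Ly[of j] xj s_def by simp
    have "y$l \<le> restr U (UNIV-{j}) $ l" for l
      using yx[rule_format, of l] xW[rule_format, of l] WleJ[of l] by linarith
    then have yb: "y \<in> box_int 0 (restr U (UNIV-{j}))" unfolding box_int_def
      using y0 by simp
    have "LValpha a i y > 1" using condC_use[OF nn Cj yg yb[unfolded U_def]] ij by simp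
    moreover have "LValpha a i y = s" using Ly[of i] Lx[of i] t_def Wge by simp
    ultimately show False using s01 by simp
  qed
  define Ri where "Ri = 1 - LValpha a i W"
  define Rj where "Rj = 1 - LValpha a j W"
  have Ri0: "0 < Ri" using A Ri_def by simp
  have B: "a$i$j * Rj < a$j$j * Ri"
  proof (cases "a$i$j = 0")
    case True then show ?thesis using ajj Ri0 by simp
  next
    case False
    then have aij: "0 < a$i$j" using nn by (metis order_le_less)
    show ?thesis
    proof (cases "Ri / a$i$j \<le> U$j")
      case True
      define q where "q = (\<chi> l. if l = j then Ri / a$i$j else W$l)"
      have Lq: "\<And>m. LValpha a m q = LValpha a m W + a$m$j * (Ri / a$i$j)"
        unfolding q_def using L_upd[of a _ j "Ri / a$i$j" W] Wi by simp
      have q0: "\<forall>l. 0 \<le> q$l" unfolding q_def using W0 Ri0 aij by simp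
      have qg: "q \<in> gamma a i" unfolding gamma_def using q0 Lq[of i] aij Ri_def by simp
      have "q$l \<le> restr U (UNIV-{i}) $ l" for l
        using True WleI[of l] ij by (cases "l = j") (auto simp: q_def restr_def)
      then have qb: "q \<in> box_int 0 (restr U (UNIV-{i}))" unfolding box_int_def
        using q0 by simp
      have "LValpha a j q > 1" using condC_use[OF nn Ci qg qb[unfolded U_def]] ij by simp
      then have "1 - LValpha a j W < a$j$j * (Ri / a$i$j)" using Lq[of j] by simp
      then have "Rj * a$i$j < a$j$j * Ri" using aij unfolding Rj_def by (simp add: less_divide_eq)
      then show ?thesis by (simp add: mult.commute)
    next
      case False
      show ?thesis
      proof (rule ccontr)
        assume "\<not> ?thesis"
        then have h: "a$j$j * Ri \<le> a$i$j * Rj" by simp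
        have RR: "Ri / a$i$j \<le> Rj / a$j$j" using h aij ajj by (simp add: divide_simps mult.commute)
        define q where "q = (\<chi> l. if l = j then Rj / a$j$j else W$l)"
        have Lq: "\<And>m. LValpha a m q = LValpha a m W + a$m$j * (Rj / a$j$j)"
          unfolding q_def using L_upd[of a _ j "Rj / a$j$j" W] Wi by simp
        have gt: "U$j < q$j" using False RR unfolding q_def by simp
        have "0 \<le> q$l" for l
          using W0 gt U0[rule_format, of j] by (cases "l = j") (auto simp: q_def)
        then have q0: "\<forall>l. 0 \<le> q$l" by simp
        have "LValpha a j q \<le> 1" using Lq[of j] ajj Rj_def by simp
        then have "LValpha a i q < 1" using KP[OF pos nn q0 _ gt[unfolded U_def]] ij by simp
        moreover have "Ri \<le> (a$i$j * Rj) / a$j$j" using h ajj by (simp add: le_divide_eq mult.commute)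
        then have "Ri \<le> a$i$j * (Rj / a$j$j)" by simp
        ultimately show False using Lq[of i] Ri_def by simp
      qed
    qed
  qed
  have "a$i$j / a$j$j * Rj < Ri" using B ajj by (simp add: divide_simps mult.commute)
  then show ?thesis unfolding star_def Let_def W_def[symmetric] U_def[symmetric] Ri_def Rj_def
    using Ri0 Ri_def by simp
qed

lemma star_dec:
  assumes ik: "i \<noteq> k" and st: "star a i k" and pos: "\<forall>i. a$i$i > 0"
  shows "LValpha a i (restr (Uvec a) (UNIV-{i})) - 1 < a$i$k * Uvec a $ k
       \<and> a$k$k * (LValpha a i (restr (Uvec a) (UNIV-{i})) - 1) < a$i$k * (LValpha a k (restr (Uvec a) (UNIV-{i})) - 1)"
proof -
  define W where "W = restr (Uvec a) (UNIV-{i})"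
  define V where "V = restr (Uvec a) (UNIV-{i,k})"
  have LW: "\<And>m. LValpha a m W = LValpha a m V + a$m$k * Uvec a $ k"
    unfolding W_def V_def by (rule L_restr2[OF ik])
  have akk: "0 < a$k$k" using pos by simp
  have h: "max 0 (a$i$k / a$k$k * (1 - LValpha a k V)) < 1 - LValpha a i V"
    using st unfolding star_def Let_def V_def by simp
  then have h1: "0 < 1 - LValpha a i V" and h2: "a$i$k / a$k$k * (1 - LValpha a k V) < 1 - LValpha a i V"
    by auto
  from h2 have "a$i$k * (1 - LValpha a k V) < a$k$k * (1 - LValpha a i V)"
    using akk by (simp add: divide_simps mult.commute)
  then show ?thesis using h1 LW[of i] LW[of k] unfolding W_def[symmetric]
    by (simp add: algebra_simps)
qed

lemma partII:
  assumes pos: "\<forall>i. a$i$i > 0" and nn: "\<forall>i j. a$i$j \<ge> 0"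
    and H: "\<forall>j. j \<noteq> i \<longrightarrow> star a i j"
  shows "condC a i"
proof -
  define U where "U = Uvec a"
  define W where "W = restr U (UNIV-{i})"
  have W0: "\<forall>l. 0 \<le> W$l" unfolding W_def U_def using restr_nonneg[OF pos nn] by blast
  have U0: "\<forall>l. 0 \<le> U$l" unfolding U_def using U_nonneg[OF pos nn] by blast
  have Wi: "W$i = 0" and WU: "\<And>l. l \<noteq> i \<Longrightarrow> W$l = U$l" unfolding W_def restr_def by auto
  show ?thesis
  proof (cases "LValpha a i W < 1")
    case True then show ?thesis unfolding condC_def W_def U_def by simp
  next
    case False
    define e where "e = LValpha a i W - 1"
    define g where "g = (\<lambda>j. LValpha a j W - 1)"
    have e0: "0 \<le> e" using False e_def by simp
    have SD: "e < a$i$k * U$k \<and> a$k$k * e < a$i$k * g k" if "k \<noteq> i" for k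
      using star_dec[of i k a] H that pos unfolding e_def g_def W_def U_def by auto
    have aik: "0 < a$i$k" if "k \<noteq> i" for k
    proof -
      have "0 < a$i$k * U$k" using SD[OF that] e0 by linarith
      then show ?thesis using nn U0 by (metis zero_less_mult_iff not_le order_le_less)
    qed
    have gpos: "0 < g j" if "j \<noteq> i" for j
    proof -
      have "0 \<le> a$j$j * e" using e0 pos[rule_format, of j] by simp
      then have "0 < a$i$j * g j" using SD[OF that] by linarith
      then show ?thesis using aik[OF that] by (simp add: zero_less_mult_iff)
    qed
    have claim: "a$j$k * e < a$i$k * g j" if ji: "j \<noteq> i" and ki: "k \<noteq> i" for j k
    proof (cases "k = j")
      case True then show ?thesis using SD[OF ki] by simp
    next
      case kj: False
      show ?thesis
      proof (cases "e = 0")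
        case True then show ?thesis using aik[OF ki] gpos[OF ji] by simp
      next
        case False
        then have ep: "0 < e" using e0 by simp
        show ?thesis
        proof (rule ccontr)
          assume "\<not> ?thesis"
          then have cg: "a$i$k * g j \<le> a$j$k * e" by simp
          have aij: "0 < a$i$j" using aik[OF ji] .
          have aik': "0 < a$i$k" using aik[OF ki] .
          define T where "T = a$i$k * U$k - e"
          have Tp: "0 < T" using SD[OF ki] T_def by simp
          define s where "s = T / a$i$j"
          have sp: "0 < s" using Tp aij s_def by simp
          have as: "a$i$j * s = T" using aij s_def by simp
          define p0 where "p0 = (\<chi> l. if l = k then 0 else W$l)"
          define p where "p = (\<chi> l. if l = j then U$j + s else p0$l)"
          have Lp0: "LValpha a m p0 = LValpha a m W - a$m$k * U$k" for m
            unfolding p0_def using L_upd[of a m k 0 W] WU[OF ki] by simp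
          have Lp: "LValpha a m p = LValpha a m W - a$m$k * U$k + a$m$j * s" for m
            unfolding p_def using L_upd[of a m j "U$j + s" p0] Lp0[of m] WU[OF ji] kj
            by (simp add: p0_def)
          have Lpi: "LValpha a i p = 1" using Lp[of i] as T_def e_def by simp
          have F1: "a$i$j * (a$i$k * g j) \<le> a$i$j * (a$j$k * e)" using cg aij by simp
          have F2: "a$i$k * (a$j$j * e) < a$i$k * (a$i$j * g j)" using SD[OF ji] aik' by simp
          have "(a$i$j * a$j$k - a$i$k * a$j$j) * e > 0" using F1 F2 by (simp add: algebra_simps)
          then have rp: "0 < a$i$j * a$j$k - a$i$k * a$j$j" using ep by (simp add: zero_less_mult_iff)
          have rT: "0 < (a$i$j * a$j$k - a$i$k * a$j$j) * T" using rp Tp by simp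
          have eq: "a$i$k * (a$i$j * (g j + a$j$j * s - a$j$k * U$k))
              = a$i$j * (a$i$k * g j) + a$i$k * a$j$j * T - a$i$j * a$j$k * (a$i$k * U$k)"
            using as by (simp add: algebra_simps)
          have eq2: "a$i$j * a$j$k * (a$i$k * U$k) = a$i$j * a$j$k * T + a$i$j * (a$j$k * e)"
            unfolding T_def by (simp add: algebra_simps)
          have eq3: "(a$i$j * a$j$k - a$i$k * a$j$j) * T = a$i$j * a$j$k * T - a$i$k * a$j$j * T"
            by (simp add: algebra_simps)
          have "a$i$k * (a$i$j * (g j + a$j$j * s - a$j$k * U$k)) < 0"
            using eq eq2 eq3 F1 rT by linarith
          then have "g j + a$j$j * s - a$j$k * U$k < 0" using aik' aij
            by (metis mult_pos_pos not_le mult_nonneg_nonneg order_le_less zero_less_mult_iff)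
          then have Lpj: "LValpha a j p \<le> 1" using Lp[of j] g_def by simp
          have "0 \<le> p$l" for l
            using W0 sp U0[rule_format, of j] by (auto simp: p_def p0_def)
          then have p0': "\<forall>l. 0 \<le> p$l" by simp
          have gt: "Uvec a $ j < p$j" using sp by (simp add: p_def U_def)
          have "LValpha a i p < 1" using KP[OF pos nn p0' Lpj gt] ji by simp
          then show False using Lpi by simp
        qed
      qed
    qed
    have main: "1 < LValpha a j x" if xg: "x \<in> gamma a i" and xb: "x \<in> box_int 0 W" and ji: "j \<noteq> i" for x j
    proof -
      have x0: "\<forall>l. 0 \<le> x$l" and Lxi: "LValpha a i x = 1" using xg by (auto simp: gamma_def)
      have xW: "\<forall>l. x$l \<le> W$l" using xb by (auto simp: box_int_def)
      define d where "d = (\<lambda>l. W$l - x$l)"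
      have d0: "\<forall>l. 0 \<le> d l" using xW d_def by simp
      have di: "d i = 0" using xW x0 Wi d_def by (metis antisym diff_self)
      have Sd: "(\<Sum>l\<in>UNIV. a$m$l * d l) = LValpha a m W - LValpha a m x" for m
        unfolding LValpha_def d_def by (simp add: right_diff_distrib sum_subtractf)
      have per: "a$j$l * d l * e \<le> a$i$l * d l * g j" for l
      proof (cases "l = i")
        case True then show ?thesis using di by simp
      next
        case False
        have "(a$j$l * e) * d l \<le> (a$i$l * g j) * d l"
          using claim[OF ji False] d0 by (intro mult_right_mono) auto
        then show ?thesis by (simp add: algebra_simps)
      qed
      show ?thesis
      proof (cases "e = 0")
        case True
        have "(\<Sum>l\<in>UNIV. a$i$l * d l) = 0" using Sd[of i] Lxi True e_def by simp
        moreover have "\<forall>l\<in>UNIV. 0 \<le> a$i$l * d l" using nn d0 by simp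
        ultimately have z: "\<forall>l. a$i$l * d l = 0" using sum_nonneg_eq_0_iff[of UNIV "\<lambda>l. a$i$l * d l"] by simp
        have "d l = 0" for l
        proof (cases "l = i")
          case True then show ?thesis using di by simp
        next
          case False then show ?thesis using z aik[OF False] by (metis mult_eq_0_iff less_irrefl)
        qed
        then have "(\<Sum>l\<in>UNIV. a$j$l * d l) = 0" by simp
        then show ?thesis using Sd[of j] gpos[OF ji] g_def by simp
      next
        case False
        then have ep: "0 < e" using e0 by simp
        have "\<exists>l. 0 < a$i$l * d l"
        proof (rule ccontr)
          assume "\<not> ?thesis"
          then have "(\<Sum>l\<in>UNIV. a$i$l * d l) \<le> 0" by (intro sum_nonpos) (simp add: not_less)
          then show False using Sd[of i] Lxi e_def ep by simp
        qed
        then obtain l0 where l0: "0 < a$i$l0 * d l0" by blast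
        have l0i: "l0 \<noteq> i" using l0 di by auto
        have dl0: "0 < d l0" using l0 nn d0 by (metis mult_eq_0_iff order_le_less)
        have "(\<Sum>l\<in>UNIV. a$j$l * d l) * e = (\<Sum>l\<in>UNIV. a$j$l * d l * e)" by (simp add: sum_distrib_right)
        also have "\<dots> < (\<Sum>l\<in>UNIV. a$i$l * d l * g j)"
        proof (rule sum_strict_mono_ex1)
          show "\<forall>l\<in>UNIV. a$j$l * d l * e \<le> a$i$l * d l * g j" using per by simp
          have "(a$j$l0 * e) * d l0 < (a$i$l0 * g j) * d l0"
            using claim[OF ji l0i] dl0 by (intro mult_strict_right_mono) auto
          then show "\<exists>l\<in>UNIV. a$j$l * d l * e < a$i$l * d l * g j" by (auto simp: algebra_simps)
        qed simp
        also have "\<dots> = (\<Sum>l\<in>UNIV. a$i$l * d l) * g j" by (simp add: sum_distrib_right)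
        also have "\<dots> = e * g j" using Sd[of i] Lxi e_def by simp
        finally have "(\<Sum>l\<in>UNIV. a$j$l * d l) < g j" using ep by (simp add: mult.commute)
        then show ?thesis using Sd[of j] g_def by simp
      qed
    qed
    show ?thesis unfolding condC_def using main unfolding W_def U_def by blast
  qed
qed

theorem lemma3p2:
  fixes a :: "real^'n^'n"
  assumes "CARD('n) \<ge> 2"
    and "\<forall>i. a$i$i > 0"
    and "\<forall>i j. a$i$j \<ge> 0"
  shows "(\<forall>J::'n set. card J > 1 \<longrightarrow> (\<forall>i\<in>J. condC a i) \<longrightarrow>
            (\<forall>i\<in>J. \<forall>j\<in>J. i \<noteq> j \<longrightarrow> star a i j))
       \<and> (\<forall>i. (\<forall>j. j \<noteq> i \<longrightarrow> star a i j) \<longrightarrow> condC a i)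
       \<and> ((\<forall>i. condC a i) \<longleftrightarrow> (\<forall>i j. i \<noteq> j \<longrightarrow> star a i j))"
proof (intro conjI)
  show "\<forall>J::'n set. card J > 1 \<longrightarrow> (\<forall>i\<in>J. condC a i) \<longrightarrow>
            (\<forall>i\<in>J. \<forall>j\<in>J. i \<noteq> j \<longrightarrow> star a i j)"
  proof (intro allI impI ballI)
    fix J :: "'n set" and i j
    assume "\<forall>i\<in>J. condC a i" "i \<in> J" "j \<in> J" "i \<noteq> j"
    then show "star a i j" using partI[OF assms(2,3)] by simp
  qed
  show "\<forall>i. (\<forall>j. j \<noteq> i \<longrightarrow> star a i j) \<longrightarrow> condC a i"
    using partII[OF assms(2,3)] by simp
  show "(\<forall>i. condC a i) \<longleftrightarrow> (\<forall>i j. i \<noteq> j \<longrightarrow> star a i j)"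
  proof
    assume "\<forall>i. condC a i"
    then show "\<forall>i j. i \<noteq> j \<longrightarrow> star a i j" using partI[OF assms(2,3)] by simp
  next
    assume "\<forall>i j. i \<noteq> j \<longrightarrow> star a i j"
    then show "\<forall>i. condC a i" using partII[OF assms(2,3)] by simp
  qed
qed

end
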